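(* Let $p$ be an odd prime with $p\equiv 1\pmod 4$ such that a perfect $B[-1,3](p)$ set exists. Then the multiplicative order of $-\tfrac23$ (i.e. of $-2\cdot 3^{-1}\bmod p$) in $\mathbb{Z}_p^\ast$ is odd.
   Context: $\mathbb{Z}_p^\ast$ is the multiplicative group of nonzero residues modulo $p$. A set $B\subseteq\mathbb{Z}_p$ is a perfect $B[-1,3](p)$ set if every nonzero element of $\mathbb{Z}_p$ has a unique representation $ab \bmod p$ with $a\in\{-1,1,2,3\}$ and $b\in B$ (and $0$ has no such representation); equivalently $B\subseteq\mathbb{Z}_p^\ast$, $|B|=(p-1)/4$, and the sets $\{-b,b,2b,3b\}$, $b\in B$, partition $\mathbb{Z}_p^\ast$. *)

theory Defs
  imports "HOL-Number_Theory.Number_Theory"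
begin

text \<open>Residues mod p are represented by the natural numbers 0..p-1.
  The multiplier set {-1,1,2,3} is taken as integers and products are reduced mod p.
  B is a perfect B[-1,3](p) set iff B is a set of residues and every residue
  x in {0..p-1} is represented as (a*b) mod p with a in {-1,1,2,3}, b in B,
  uniquely when x is nonzero, and not at all when x = 0.\<close>

definition perfect_B_m1_3 :: "nat \<Rightarrow> nat set \<Rightarrow> bool" where
  "perfect_B_m1_3 p B \<longleftrightarrow>
     B \<subseteq> {0..<p} \<and>
     (\<forall>x\<in>{1..<p}. \<exists>!(a, b). a \<in> {-1, 1, 2, 3::int} \<and> b \<in> B \<and> (a * int b) mod int p = int x) \<and>
     \<not> (\<exists>a\<in>{-1, 1, 2, 3::int}. \<exists>b\<in>B. (a * int b) mod int p = 0)"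

end

theory Submission
  imports Defs
begin


lemma lemJ:
  fixes w :: int
  shows "\<not> (2::int)^Suc k dvd (w - 2^k) \<Longrightarrow>
    \<exists>j::nat. (even j \<and> (2::int)^Suc k dvd (int j * w - 2^k)) \<or> (odd j \<and> (2::int)^Suc k dvd (int j * w))"
proof (induction k arbitrary: w)
  case 0
  then have "even w" by simp
  then show ?case by (intro exI[of _ 1]) simp
next
  case (Suc k)
  show ?case
  proof (cases "even w")
    case False
    then obtain t where t: "w = 2*t+1" by (meson oddE)
    have "(2::int)^Suc (Suc k) dvd (int (2^Suc k) * w - 2^Suc k)"
      by (simp add: t algebra_simps)
    then show ?thesis by (intro exI[of _ "2^Suc k"]) simp
  next
    case True
    then obtain t where t: "w = 2*t" by blast
    have "\<not> (2::int)^Suc k dvd (t - 2^k)"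
    proof
      assume "(2::int)^Suc k dvd (t - 2^k)"
      then have "2 * (2::int)^Suc k dvd 2 * (t - 2^k)" by (rule mult_dvd_mono[OF dvd_refl])
      moreover have "2 * (t - 2^k) = w - 2^Suc k" by (simp add: t algebra_simps)
      ultimately show False using Suc.prems by simp
    qed
    from Suc.IH[OF this] obtain j where
      j: "(even j \<and> (2::int)^Suc k dvd (int j * t - 2^k)) \<or> (odd j \<and> (2::int)^Suc k dvd (int j * t))" by blast
    show ?thesis
    proof (intro exI[of _ j])
      show "(even j \<and> (2::int)^Suc (Suc k) dvd (int j * w - 2^Suc k)) \<or> (odd j \<and> (2::int)^Suc (Suc k) dvd (int j * w))"
      proof (cases "even j")
        case True
        have "2 * (2::int)^Suc k dvd 2 * (int j * t - 2^k)" using j True by (intro mult_dvd_mono) auto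
        moreover have "2 * (int j * t - 2^k) = int j * w - 2^Suc k" by (simp add: t algebra_simps)
        ultimately show ?thesis using True by (metis power_Suc)
      next
        case False
        have "2 * (2::int)^Suc k dvd 2 * (int j * t)" using j False by (intro mult_dvd_mono) auto
        moreover have "2 * (int j * t) = int j * w" by (simp add: t algebra_simps)
        ultimately show ?thesis using False by (metis power_Suc)
      qed
    qed
  qed
qed

lemma lemS:
  fixes F :: "int \<Rightarrow> int" and w r0 :: int
  assumes per: "\<And>a b. (2::int)^Suc k dvd (a - b) \<Longrightarrow> F a = F b"
    and sh: "\<And>j::nat. F (r0 - int j * w) = (-1)^j * F r0"
    and hf: "F (r0 + 2^k) = - F r0"
    and nw: "\<not> (2::int)^Suc k dvd (w - 2^k)"
  shows "F r0 = 0"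
proof -
  from lemJ[OF nw] obtain j :: nat where
    j: "(even j \<and> (2::int)^Suc k dvd (int j * w - 2^k)) \<or> (odd j \<and> (2::int)^Suc k dvd (int j * w))" by blast
  show ?thesis
  proof (cases "even j")
    case True
    with j have d: "(2::int)^Suc k dvd ((r0 - int j * w) - (r0 + 2^k))"
    proof -
      from True j have "(2::int)^Suc k dvd (int j * w - 2^k)" by simp
      then have "(2::int)^Suc k dvd -(int j * w - 2^k) - 2^Suc k" by (rule dvd_diff[OF dvd_minus_iff[THEN iffD2] dvd_refl])
      moreover have "-(int j * w - 2^k) - 2^Suc k = (r0 - int j * w) - (r0 + 2^k)" by (simp add: algebra_simps)
      ultimately show ?thesis by metis
    qed
    have "F (r0 - int j * w) = F (r0 + 2^k)" by (rule per[OF d])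
    with sh[of j] hf True show ?thesis by simp
  next
    case False
    with j have "(2::int)^Suc k dvd ((r0 - int j * w) - r0)" by simp
    then have "F (r0 - int j * w) = F r0" by (rule per)
    with sh[of j] False show ?thesis by simp
  qed
qed

lemma lemMax:
  fixes D :: "int \<Rightarrow> int"
  assumes per: "\<And>a b. (2::int)^Suc k dvd (a - b) \<Longrightarrow> D a = D b"
    and anti: "\<And>q. D (q + 2^k) = - D q"
    and eq: "\<And>q. 2 * D q + D (q - x) + D (q - y) = 0"
    and nx: "\<not> (2::int)^Suc k dvd (x - 2^k)"
  shows "D r = 0"
proof (rule ccontr)
  assume nz: "D r \<noteq> 0"
  define L where "L = {0..<(2::int)^Suc k}"
  define M where "M = Max (abs ` D ` L)"
  have finL: "finite L" unfolding L_def by simp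
  have bound: "\<bar>D a\<bar> \<le> M" for a
  proof -
    have "D a = D (a mod 2^Suc k)"
      by (rule per) (simp add: mod_eq_dvd_iff[symmetric] mod_mod_trivial)
    moreover have "a mod 2^Suc k \<in> L" unfolding L_def by simp
    ultimately show ?thesis unfolding M_def using finL
      by (metis Max_ge finite_imageI image_eqI)
  qed
  have "L \<noteq> {}" unfolding L_def by simp
  then have "M \<in> abs ` D ` L" unfolding M_def using finL by (intro Max_in) auto
  then obtain q0 where q0: "\<bar>D q0\<bar> = M" by blast
  have Mpos: "M > 0" using bound[of r] nz by simp
  obtain q1 where q1: "D q1 = M"
  proof (cases "D q0 = M")
    case True then show ?thesis using that by blast
  next
    case False
    then have "D (q0 + 2^k) = M" using q0 anti[of q0] by linarith
    then show ?thesis using that by blast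
  qed
  have step: "D (a - x) = - D a" if "\<bar>D a\<bar> = M" for a
    using eq[of a] bound[of "a - x"] bound[of "a - y"] that by linarith
  have sh: "D (q1 - int j * x) = (-1)^j * D q1" for j :: nat
  proof (induction j)
    case 0 then show ?case by simp
  next
    case (Suc j)
    have "\<bar>D (q1 - int j * x)\<bar> = M" using Suc q1 Mpos by (simp add: abs_mult)
    then have st: "D ((q1 - int j * x) - x) = - D (q1 - int j * x)" by (rule step)
    have e: "q1 - int (Suc j) * x = (q1 - int j * x) - x" by (simp add: algebra_simps)
    show ?case unfolding e st Suc.IH by simp
  qed
  have "D q1 = 0" by (rule lemS[OF per sh anti nx])
  with q1 Mpos show False by simp
qed

lemma lemT2:
  fixes N :: "int \<Rightarrow> int" and x y m :: int
  assumes "\<And>a b. (2::int)^k dvd (a - b) \<Longrightarrow> N a = N b"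
    and "\<And>q. 2 * N q + N (q - x) + N (q - y) = m"
    and "odd m"
  shows False
  using assms
proof (induction k arbitrary: N)
  case 0
  have "N (0 - x) = N 0" "N (0 - y) = N 0" by (rule "0.prems"(1); simp)+
  then have "4 * N 0 = m" using "0.prems"(2)[of 0] by simp
  then show False using "0.prems"(3) by presburger
next
  case (Suc k)
  note per = Suc.prems(1) and eq = Suc.prems(2)
  define h :: int where "h = 2^k"
  have per2: "N (a + 2 * h) = N a" for a by (rule per) (simp add: h_def)
  show False
  proof (cases "(2::int)^Suc k dvd (x - h) \<and> (2::int)^Suc k dvd (y - h)")
    case True
    have nxx: "N (q - x) = N (q + h)" for q
    proof (rule per)
      have "(2::int)^Suc k dvd -(x - h) - 2^Suc k" using True by (intro dvd_diff[OF dvd_minus_iff[THEN iffD2] dvd_refl]) auto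
      moreover have "-(x - h) - 2^Suc k = (q - x) - (q + h)" by (simp add: h_def algebra_simps)
      ultimately show "(2::int)^Suc k dvd (q - x) - (q + h)" by metis
    qed
    have nyy: "N (q - y) = N (q + h)" for q
    proof (rule per)
      have "(2::int)^Suc k dvd -(y - h) - 2^Suc k" using True by (intro dvd_diff[OF dvd_minus_iff[THEN iffD2] dvd_refl]) auto
      moreover have "-(y - h) - 2^Suc k = (q - y) - (q + h)" by (simp add: h_def algebra_simps)
      ultimately show "(2::int)^Suc k dvd (q - y) - (q + h)" by metis
    qed
    have "2 * N 0 + 2 * N (0 + h) = m" using eq[of 0] nxx[of 0] nyy[of 0] by simp
    then show False using Suc.prems(3) by presburger
  next
    case False
    define D where "D q = N q - N (q + h)" for q
    have perD: "D a = D b" if "(2::int)^Suc k dvd (a - b)" for a b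
    proof -
      have "N a = N b" using that by (rule per)
      moreover have "N (a + h) = N (b + h)" using that by (intro per) simp
      ultimately show ?thesis by (simp add: D_def)
    qed
    have antiD: "D (q + 2^k) = - D q" for q
      using per2[of q] by (simp add: D_def h_def algebra_simps)
    have eqD: "2 * D q + D (q - x) + D (q - y) = 0" for q
    proof -
      have "2 * N (q + h) + N (q + h - x) + N (q + h - y) = m" by (rule eq)
      moreover have "N (q + h - x) = N (q - x + h)" "N (q + h - y) = N (q - y + h)"
        by (simp_all add: algebra_simps)
      ultimately show ?thesis using eq[of q] by (simp add: D_def)
    qed
    have D0: "D q = 0" for q
    proof (cases "(2::int)^Suc k dvd (x - h)")
      case False
      then show ?thesis using lemMax[OF perD antiD eqD] by (simp add: h_def)
    next
      case True
      with \<open>\<not> (_ \<and> _)\<close> have ny: "\<not> (2::int)^Suc k dvd (y - 2^k)" by (simp add: h_def)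
      have eqD': "2 * D q + D (q - y) + D (q - x) = 0" for q using eqD[of q] by simp
      show ?thesis using lemMax[OF perD antiD eqD' ny] .
    qed
    have per': "N a = N b" if dab: "(2::int)^k dvd (a - b)" for a b
    proof -
      obtain t where t: "a - b = 2^k * t" using dab by (elim dvdE)
      show ?thesis
      proof (cases "even t")
        case True
        then obtain s where "t = 2 * s" by blast
        then have "(2::int)^Suc k dvd (a - b)" using t by simp
        then show ?thesis by (rule per)
      next
        case False
        then obtain s where s: "t = 2 * s + 1" by (meson oddE)
        then have "(2::int)^Suc k dvd (a - (b + h))" using t by (simp add: h_def algebra_simps)
        then have "N a = N (b + h)" by (rule per)
        also have "\<dots> = N b" using D0[of b] by (simp add: D_def)
        finally show ?thesis .
      qed
    qed
    show False by (rule Suc.IH[OF per' eq Suc.prems(3)])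
  qed
qed

lemma lemHalf:
  fixes N :: "int \<Rightarrow> int"
  assumes per: "\<And>a b. (2::int)^Suc k dvd (a - b) \<Longrightarrow> N a = N b"
    and hh: "\<And>q. N (q + 2^k) = N q"
    and dab: "(2::int)^k dvd (a - b)"
  shows "N a = N b"
proof -
  obtain t where t: "a - b = 2^k * t" using dab by (elim dvdE)
  show ?thesis
  proof (cases "even t")
    case True
    then obtain s where "t = 2 * s" by blast
    then have "(2::int)^Suc k dvd (a - b)" using t by simp
    then show ?thesis by (rule per)
  next
    case False
    then obtain s where s: "t = 2 * s + 1" by (meson oddE)
    then have "(2::int)^Suc k dvd (a - (b + 2^k))" using t by (simp add: algebra_simps)
    then have "N a = N (b + 2^k)" by (rule per)
    also have "\<dots> = N b" by (rule hh)
    finally show ?thesis .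
  qed
qed

lemma lemT1:
  fixes N :: "int \<Rightarrow> int" and u v m :: int
  assumes per: "\<And>a b. (2::int)^Suc k dvd (a - b) \<Longrightarrow> N a = N b"
    and eq: "\<And>q. N q + N (q + 2^k) + N (q - u) + N (q - v) = m"
    and om: "odd m"
  shows "(2::int)^Suc k dvd (v - u - 2^k)"
proof (rule ccontr)
  assume nw: "\<not> (2::int)^Suc k dvd (v - u - 2^k)"
  define h :: int where "h = 2^k"
  have per2: "N (a + 2 * h) = N a" for a by (rule per) (simp add: h_def)
  define D where "D q = N q - N (q + h)" for q
  have perD: "D a = D b" if "(2::int)^Suc k dvd (a - b)" for a b
  proof -
    have "N a = N b" using that by (rule per)
    moreover have "N (a + h) = N (b + h)" using that by (intro per) simp
    ultimately show ?thesis by (simp add: D_def)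
  qed
  have antiD: "D (q + 2^k) = - D q" for q
    using per2[of q] by (simp add: D_def h_def algebra_simps)
  have eqD: "D (q - u) + D (q - v) = 0" for q
  proof -
    have "N (q + h) + N (q + h + h) + N (q + h - u) + N (q + h - v) = m" using eq[of "q + h"] by (simp add: h_def)
    moreover have "N (q + h + h) = N q" using per2[of q] by (simp add: algebra_simps)
    moreover have "N (q + h - u) = N (q - u + h)" "N (q + h - v) = N (q - v + h)"
      by (simp_all add: algebra_simps)
    ultimately show ?thesis using eq[of q] by (simp add: D_def h_def)
  qed
  define w where "w = v - u"
  have stepD: "D (r - w) = - D r" for r
    using eqD[of "r + u"] by (simp add: w_def algebra_simps)
  have D0: "D r = 0" for r
  proof -
    have sh: "D (r - int j * w) = (-1)^j * D r" for j :: nat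
    proof (induction j)
      case 0 then show ?case by simp
    next
      case (Suc j)
      have e: "r - int (Suc j) * w = (r - int j * w) - w" by (simp add: algebra_simps)
      show ?case unfolding e stepD Suc.IH by simp
    qed
    show ?thesis using lemS[where F=D, OF perD sh antiD] nw unfolding w_def by blast
  qed
  have hh: "N (q + 2^k) = N q" for q using D0[of q] by (simp add: D_def h_def)
  have per': "N a = N b" if "(2::int)^k dvd (a - b)" for a b
    by (rule lemHalf[where N=N and k=k, OF per hh that])
  have eq2: "2 * N q + N (q - u) + N (q - v) = m" for q using eq[of q] hh[of q] by simp
  show False by (rule lemT2[OF per' eq2 om])
qed



lemma count_cong:
  fixes K m :: nat and q :: int
  assumes K: "K > 0"
  shows "card {i \<in> {..<K*m}. [int i = q] (mod int K)} = m"
proof -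
  define r where "r = nat (q mod int K)"
  have r: "int r = q mod int K" "r < K" using K by (simp_all add: r_def nat_less_iff)
  have "{i \<in> {..<K*m}. [int i = q] (mod int K)} = (\<lambda>t. r + K*t) ` {..<m}"
  proof (intro equalityI subsetI)
    fix i assume i: "i \<in> {i \<in> {..<K*m}. [int i = q] (mod int K)}"
    then have "int i mod int K = q mod int K" by (simp add: cong_def)
    then have im: "i mod K = r" using r by (metis of_nat_eq_iff zmod_int)
    have "i div K < m" using i K by (simp add: less_mult_imp_div_less mult.commute)
    moreover have "i = r + K * (i div K)" using im by (metis mod_div_mult_eq mult.commute add.commute)
    ultimately show "i \<in> (\<lambda>t. r + K*t) ` {..<m}" by blast
  next
    fix i assume "i \<in> (\<lambda>t. r + K*t) ` {..<m}"
    then obtain t where t: "t < m" "i = r + K*t" by blast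
    have "r + K*t < K + K*t" using r by simp
    also have "\<dots> = K * (t+1)" by simp
    also have "\<dots> \<le> K * m" using t by (intro mult_le_mono2) simp
    finally have "i < K*m" using t by simp
    moreover have "int i mod int K = q mod int K"
      using t r K by (simp add: zmod_int[symmetric] )
    ultimately show "i \<in> {i \<in> {..<K*m}. [int i = q] (mod int K)}" by (simp add: cong_def)
  qed
  moreover have "inj_on (\<lambda>t. r + K*t) {..<m}" using K by (auto simp: inj_on_def)
  ultimately show ?thesis by (simp add: card_image)
qed



theorem lemma4p5:
  fixes p :: nat and B :: "nat set" and x :: nat
  assumes "prime p" and "odd p" and "[p = 1] (mod 4)"
    and "perfect_B_m1_3 p B"
    and "[int (3 * x) = -2] (mod int p)"
  shows "odd (ord p x)"
proof -
  note pr = assms(1)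
  have p1: "p > 1" using pr prime_gt_1_nat by blast
  have "p mod 4 = 1" using assms(3) by (simp add: cong_def)
  then have p5: "p \<ge> 5" using p1 by presburger
  define n where "n = p - 1"
  have npos: "n > 0" using p5 by (simp add: n_def)
  obtain e m where nem: "n = 2^e * m" and om: "\<not> 2 dvd m"
  proof -
    obtain y where "n = 2 ^ multiplicity 2 n * y" "odd y"
      using multiplicity_decompose'[of n 2] npos by auto
    then show thesis using that by blast
  qed
  have "even n" using assms(2) p1 by (simp add: n_def)
  then have "e \<noteq> 0" using nem om by auto
  then obtain k where ek: "e = Suc k" using not0_implies_Suc by blast
  have mpos: "m > 0" using om by (cases m) auto
  obtain g where g: "residue_primroot p g" using prime_primitive_root_exists[OF p1 pr] by blast
  have ordg: "ord p g = n" using g totient_prime[OF pr] by (simp add: residue_primroot_def n_def)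
  have cop: "coprime p g" using g by (simp add: residue_primroot_def)
  have bij: "bij_betw (\<lambda>i. g^i mod p) {..<n} {0<..<p}"
    using residue_primroot_is_generator[OF p1 g] totient_prime[OF pr] totatives_prime[OF pr]
    by (simp add: n_def)
  define ind where "ind = inv_into {..<n} (\<lambda>i. g^i mod p)"
  have ind1: "ind y < n \<and> g^(ind y) mod p = y" if "y \<in> {0<..<p}" for y
  proof -
    have "ind y \<in> {..<n}" using bij_betw_inv_into[OF bij] that unfolding ind_def
      by (meson bij_betwE)
    moreover have "g^(ind y) mod p = y" unfolding ind_def
      using bij_betw_inv_into_right[OF bij that] .
    ultimately show ?thesis by simp
  qed
  have expcong: "[g^i = g^j] (mod p) \<longleftrightarrow> [i = j] (mod n)" for i j
    using order_divides_expdiff[OF cop] ordg by simp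
  have indc: "ind y = i mod n" if y: "y \<in> {0<..<p}" and c: "[g^i = y] (mod p)" for y i
  proof -
    have "[g^(ind y) = g^i] (mod p)"
      using ind1[OF y] c y by (simp add: cong_def)
    then have "[ind y = i] (mod n)" using expcong by simp
    then have "ind y mod n = i mod n" by (simp add: cong_def)
    then show ?thesis using ind1[OF y] by simp
  qed
  have gpos: "g > 0" using cop p1 by (cases g) auto
  have n2: "n div 2 = 2^k * m" using nem ek by simp
  have indm1: "ind (p - 1) = n div 2"
  proof -
    define z where "z = g^(n div 2)"
    have "n div 2 + n div 2 = n" using \<open>even n\<close> by (elim evenE) simp
    then have "[n div 2 + n div 2 = 0] (mod n)" by (simp add: cong_def)
    then have "[g^(n div 2 + n div 2) = g^0] (mod p)"
      using expcong by blast
    then have "[z * z = 1] (mod p)" by (simp add: z_def power_add)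
    then have "[int z * int z = 1] (mod int p)" by (metis cong_int_iff of_nat_1 of_nat_mult)
    moreover have "int z > 0" using gpos by (simp add: z_def)
    ultimately have "[int z = 1] (mod int p) \<or> [int z = - 1] (mod int p)"
      using cong_square[of "int p" "int z"] pr by simp
    moreover have "\<not> [int z = 1] (mod int p)"
    proof
      assume "[int z = 1] (mod int p)"
      then have "[g^(n div 2) = g^0] (mod p)" by (simp add: z_def cong_int_iff[symmetric])
      then have "[n div 2 = 0] (mod n)" using expcong by blast
      then have "n div 2 mod n = 0" by (simp add: cong_def)
      moreover have "n div 2 < n" "n div 2 > 0" using npos \<open>even n\<close> by auto
      ultimately show False by simp
    qed
    ultimately have "[int z = -1] (mod int p)" by blast
    moreover have "[-1 = int (p - 1)] (mod int p)" using p1 by (simp add: cong_iff_dvd_diff of_nat_diff)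
    ultimately have "[int z = int (p - 1)] (mod int p)" by (rule cong_trans)
    then have "[g^(n div 2) = p - 1] (mod p)" unfolding z_def by (metis cong_int_iff of_nat_power)
    then have "ind (p - 1) = n div 2 mod n" using p1 by (intro indc) auto
    then show ?thesis using npos by simp
  qed
  have perf: "B \<subseteq> {0..<p}"
    "\<And>y. y \<in> {1..<p} \<Longrightarrow> \<exists>!(a, b). a \<in> {-1, 1, 2, 3::int} \<and> b \<in> B \<and> (a * int b) mod int p = int y"
    "\<And>a b. a \<in> {-1, 1, 2, 3::int} \<Longrightarrow> b \<in> B \<Longrightarrow> (a * int b) mod int p \<noteq> 0"
  proof -
    have pd: "B \<subseteq> {0..<p} \<and>
     (\<forall>x\<in>{1..<p}. \<exists>!(a, b). a \<in> {-1, 1, 2, 3::int} \<and> b \<in> B \<and> (a * int b) mod int p = int x) \<and>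
     \<not> (\<exists>a\<in>{-1, 1, 2, 3::int}. \<exists>b\<in>B. (a * int b) mod int p = 0)"
      using assms(4) unfolding perfect_B_m1_3_def .
    show "B \<subseteq> {0..<p}" using pd by (rule conjunct1)
    show "\<exists>!(a, b). a \<in> {-1, 1, 2, 3::int} \<and> b \<in> B \<and> (a * int b) mod int p = int y" if "y \<in> {1..<p}" for y
      using conjunct1[OF conjunct2[OF pd]] that by (rule bspec)
    show "(a * int b) mod int p \<noteq> 0" if "a \<in> {-1, 1, 2, 3::int}" "b \<in> B" for a b
    proof
      assume h: "(a * int b) mod int p = 0"
      have "\<exists>a\<in>{-1, 1, 2, 3::int}. \<exists>b\<in>B. (a * int b) mod int p = 0"
        using that h by (intro bexI)
      then show False using conjunct2[OF conjunct2[OF pd]] by contradiction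
    qed
  qed
  have B0: "0 \<notin> B" using perf(3)[of 1 0] by auto
  have Bsub: "B \<subseteq> {0<..<p}" using perf(1) B0 by (auto simp: subset_iff) (metis gr0I)
  have finB: "finite B" using perf(1) finite_subset by blast
  define A where "A = {-1, 1, 2, 3::int}"
  define c2 where "c2 = ind 2"
  define c3 where "c3 = ind 3"
  have g2: "g^c2 mod p = 2" using ind1[of 2] p5 by (simp add: c2_def)
  have g3: "g^c3 mod p = 3" using ind1[of 3] p5 by (simp add: c3_def)
  have gm1: "g^(n div 2) mod p = p - 1" using ind1[of "p - 1"] indm1 p5 by simp
  define cA where "cA a = (if a = -1 then n div 2 else if a = 1 then 0 else if a = 2 then c2 else c3)" for a :: int
  have gA: "[int (g^(cA a)) = a] (mod int p)" if "a \<in> A" for a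
  proof -
    have "a = -1 \<or> a = 1 \<or> a = 2 \<or> a = 3" using that by (auto simp: A_def)
    then show ?thesis
    proof (elim disjE)
      assume a: "a = -1"
      have "[g^(n div 2) = p - 1] (mod p)" using gm1 p1 by (simp add: cong_def)
      then have "[int (g^(n div 2)) = int (p - 1)] (mod int p)" by (simp only: cong_int_iff)
      moreover have "[int (p - 1) = -1] (mod int p)" using p1 by (simp add: cong_iff_dvd_diff of_nat_diff)
      ultimately have "[int (g^(n div 2)) = -1] (mod int p)" by (rule cong_trans)
      then show ?thesis using a by (simp add: cA_def)
    next
      assume a: "a = 1" then show ?thesis by (simp add: cA_def)
    next
      assume a: "a = 2"
      have "int (g^c2) mod int p = 2" using g2 by (metis of_nat_mod of_nat_numeral)
      then show ?thesis using a p5 by (simp add: cA_def cong_def)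
    next
      assume a: "a = 3"
      have "int (g^c3) mod int p = 3" using g3 by (metis of_nat_mod of_nat_numeral)
      then show ?thesis using a p5 by (simp add: cA_def cong_def)
    qed
  qed
  define f where "f a b = nat ((a * int b) mod int p)" for a :: int and b :: nat
  have fint: "int (f a b) = (a * int b) mod int p" for a b
    using p1 by (simp add: f_def)
  have fpos: "f a b \<in> {0<..<p}" if "a \<in> A" "b \<in> B" for a b
  proof -
    have "(a * int b) mod int p \<noteq> 0" using perf(3) that by (simp add: A_def)
    moreover have "(a * int b) mod int p < int p" "(a * int b) mod int p \<ge> 0" using p1 by simp_all
    ultimately show ?thesis unfolding f_def by auto
  qed
  have indf: "ind (f a b) = (cA a + ind b) mod n" if ab: "a \<in> A" "b \<in> B" for a b
  proof (rule indc[OF fpos[OF ab]])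
    have b: "b \<in> {0<..<p}" using ab Bsub by auto
    have "int (g^(ind b)) mod int p = int b" using ind1[OF b] by (metis of_nat_mod)
    then have "[int (g^(ind b)) = int b] (mod int p)" using b by (simp add: cong_def)
    then have "[int (g^(cA a)) * int (g^(ind b)) = a * int b] (mod int p)"
      using gA[OF ab(1)] by (rule cong_mult[rotated])
    moreover have "[a * int b = int (f a b)] (mod int p)" by (simp add: fint cong_def)
    ultimately have "[int (g^(cA a + ind b)) = int (f a b)] (mod int p)"
      by (simp add: power_add cong_trans)
    then show "[g^(cA a + ind b) = f a b] (mod p)" by (metis cong_int_iff of_nat_power)
  qed
  define N where "N q = int (card {b\<in>B. [int (ind b) = q] (mod 2^e)})" for q
  have perN: "N a = N b" if "(2::int)^Suc k dvd (a - b)" for a b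
  proof -
    have "[a = b] (mod 2^e)" using that ek by (simp add: cong_iff_dvd_diff)
    then have "{b'\<in>B. [int (ind b') = a] (mod 2^e)} = {b'\<in>B. [int (ind b') = b] (mod 2^e)}"
      by (auto intro: cong_trans cong_sym)
    then show ?thesis by (simp add: N_def)
  qed
  have bijI: "bij_betw ind {0<..<p} {..<n}" unfolding ind_def by (rule bij_betw_inv_into[OF bij])
  have finA: "finite A" by (simp add: A_def)
  have eqN: "N q + N (q + 2^k) + N (q - int c2) + N (q - int c3) = int m" for q
  proof -
    define Y where "Y = {y \<in> {0<..<p}. [int (ind y) = q] (mod 2^e)}"
    have cardY: "card Y = m"
    proof -
      have im: "ind ` {0<..<p} = {..<n}" using bijI by (simp add: bij_betw_def)
      have "ind ` Y = {i \<in> {..<n}. [int i = q] (mod 2^e)}"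
      proof (intro equalityI subsetI)
        fix i assume "i \<in> ind ` Y"
        then show "i \<in> {i \<in> {..<n}. [int i = q] (mod 2^e)}" using im unfolding Y_def by blast
      next
        fix i assume i: "i \<in> {i \<in> {..<n}. [int i = q] (mod 2^e)}"
        then obtain y where "y \<in> {0<..<p}" "i = ind y" using im by (metis (no_types, lifting) imageE mem_Collect_eq)
        then show "i \<in> ind ` Y" using i unfolding Y_def by blast
      qed
      moreover have "inj_on ind Y" using bij_betw_imp_inj_on[OF bijI] unfolding Y_def
        by (rule inj_on_subset) auto
      ultimately have "card Y = card {i \<in> {..<n}. [int i = q] (mod 2^e)}" by (metis card_image)
      also have "\<dots> = m" using count_cong[of "2^e" m q] nem by simp
      finally show ?thesis .
    qed
    define P where "P = Sigma A (\<lambda>a. {b\<in>B. f a b \<in> Y})"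
    have bijP: "bij_betw (\<lambda>(a,b). f a b) P Y"
      unfolding bij_betw_def
    proof
      show "inj_on (\<lambda>(a,b). f a b) P"
      proof (rule inj_onI, clarify)
        fix a b a' b' assume ab: "(a, b) \<in> P" and ab': "(a', b') \<in> P" and fe: "f a b = f a' b'"
        have aA: "a \<in> A" "b \<in> B" "a' \<in> A" "b' \<in> B" using ab ab' by (auto simp: P_def)
        define y where "y = f a b"
        have y: "y \<in> {1..<p}" using fpos[OF aA(1,2)] by (auto simp: y_def)
        have u: "\<exists>!(a, b). a \<in> {-1, 1, 2, 3::int} \<and> b \<in> B \<and> (a * int b) mod int p = int y"
          by (rule perf(2)[OF y])
        have h1: "a \<in> {-1, 1, 2, 3::int} \<and> b \<in> B \<and> (a * int b) mod int p = int y"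
          using aA by (simp add: A_def y_def fint)
        have h2: "a' \<in> {-1, 1, 2, 3::int} \<and> b' \<in> B \<and> (a' * int b') mod int p = int y"
          using aA fe by (simp add: A_def y_def fint)
        from u obtain z where all: "\<And>w. (case w of (a, b) \<Rightarrow> a \<in> {-1, 1, 2, 3::int} \<and> b \<in> B \<and> (a * int b) mod int p = int y) \<Longrightarrow> w = z"
          by (metis (no_types, lifting) ex1E)
        have "(a, b) = z" using all[of "(a, b)"] h1 by simp
        moreover have "(a', b') = z" using all[of "(a', b')"] h2 by simp
        ultimately show "a = a' \<and> b = b'" by (metis prod.inject)
      qed
    next
      show "(\<lambda>(a,b). f a b) ` P = Y"
      proof (intro equalityI subsetI)
        fix y assume "y \<in> (\<lambda>(a,b). f a b) ` P"
        then show "y \<in> Y" by (auto simp: P_def)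
      next
        fix y assume yY: "y \<in> Y"
        then have y: "y \<in> {1..<p}" by (auto simp: Y_def)
        obtain a b where ab: "a \<in> {-1, 1, 2, 3::int}" "b \<in> B" "(a * int b) mod int p = int y"
          using perf(2)[OF y] by auto
        have "f a b = y" using ab(3) by (simp add: f_def)
        then show "y \<in> (\<lambda>(a,b). f a b) ` P" using ab yY unfolding P_def A_def
          by (intro image_eqI[of _ _ "(a, b)"]) auto
      qed
    qed
    have "card P = card Y" using bijP by (rule bij_betw_same_card)
    have cP: "card P = (\<Sum>a\<in>A. card {b\<in>B. f a b \<in> Y})"
      unfolding P_def using finA finB by (intro card_SigmaI) auto
    have sets: "{b\<in>B. f a b \<in> Y} = {b\<in>B. [int (ind b) = q - int (cA a)] (mod 2^e)}" if aA: "a \<in> A" for a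
    proof -
      have "f a b \<in> Y \<longleftrightarrow> [int (ind b) = q - int (cA a)] (mod 2^e)" if bB: "b \<in> B" for b
      proof -
        have "f a b \<in> Y \<longleftrightarrow> [int ((cA a + ind b) mod n) = q] (mod 2^e)"
          using fpos[OF aA bB] indf[OF aA bB] by (simp add: Y_def)
        moreover have "[(cA a + ind b) mod n = cA a + ind b] (mod 2^e)"
          unfolding cong_def using nem by (simp add: mod_mod_cancel)
        then have "[int ((cA a + ind b) mod n) = int (cA a) + int (ind b)] (mod 2^e)"
          by (metis cong_int_iff of_nat_add of_nat_numeral of_nat_power)
        ultimately have "f a b \<in> Y \<longleftrightarrow> [int (cA a) + int (ind b) = q] (mod 2^e)"
          by (meson cong_sym cong_trans)
        also have "\<dots> \<longleftrightarrow> [int (ind b) = q - int (cA a)] (mod 2^e)"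
          by (simp add: cong_iff_dvd_diff algebra_simps)
        finally show ?thesis .
      qed
      then show ?thesis by blast
    qed
    have "int m = (\<Sum>a\<in>A. N (q - int (cA a)))"
    proof -
      have "int m = int (\<Sum>a\<in>A. card {b\<in>B. f a b \<in> Y})"
        using cP \<open>card P = card Y\<close> cardY by simp
      also have "\<dots> = (\<Sum>a\<in>A. int (card {b\<in>B. f a b \<in> Y}))" by simp
      also have "\<dots> = (\<Sum>a\<in>A. N (q - int (cA a)))"
        by (rule sum.cong) (simp_all add: sets N_def)
      finally show ?thesis .
    qed
    also have "\<dots> = N (q - int (n div 2)) + N q + N (q - int c2) + N (q - int c3)"
      by (simp add: A_def cA_def)
    also have "N (q - int (n div 2)) = N (q + 2^k)"
    proof (rule perN)
      obtain t where t: "m = 2 * t + 1" using om by (metis oddE)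
      have "(q - int (n div 2)) - (q + 2^k) = 2^Suc k * (- int t - 1)"
        using n2 t by (simp add: algebra_simps)
      then show "(2::int)^Suc k dvd (q - int (n div 2)) - (q + 2^k)" by simp
    qed
    finally show ?thesis by simp
  qed
  have dv: "(2::int)^Suc k dvd (int c3 - int c2 - 2^k)"
  proof -
    have omi: "odd (int m)" using om by simp
    show ?thesis by (rule lemT1[where N=N, OF perN eqN omi])
  qed
  have cg1: "[(n div 2 + c2) * m = c3 * m] (mod n)"
  proof -
    obtain t where t: "m = 2 * t + 1" using om by (metis oddE)
    have e1: "int c3 - int (n div 2 + c2) = (int c3 - int c2 - 2^k) - 2^Suc k * int t"
      using n2 t by (simp add: algebra_simps)
    have "(2::int)^Suc k dvd (int c3 - int c2 - 2^k) - 2^Suc k * int t"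
      using dv by (rule dvd_diff) simp
    then have "(2::int)^Suc k dvd int c3 - int (n div 2 + c2)" unfolding e1 .
    then have "(2::int)^Suc k * int m dvd (int c3 - int (n div 2 + c2)) * int m" by (rule mult_dvd_mono) simp
    then have "int n dvd int (c3 * m) - int ((n div 2 + c2) * m)"
      using nem ek by (simp add: algebra_simps)
    then have "[int ((n div 2 + c2) * m) = int (c3 * m)] (mod int n)"
      by (simp add: cong_iff_dvd_diff dvd_diff_commute)
    then show ?thesis by (simp only: cong_int_iff)
  qed
  then have cg2: "[g^((n div 2 + c2) * m) = g^(c3 * m)] (mod p)" using expcong by blast
  have cg3: "[g^c3 * x = g^(n div 2 + c2)] (mod p)"
  proof -
    have a3: "[int (g^c3) = 3] (mod int p)" using gA[of 3] by (simp add: A_def cA_def)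
    have am: "[int (g^(n div 2)) = -1] (mod int p)" using gA[of "-1"] by (simp add: A_def cA_def)
    have a2: "[int (g^c2) = 2] (mod int p)" using gA[of 2] by (simp add: A_def cA_def)
    have "[int (g^c3) * int x = 3 * int x] (mod int p)" using a3 by (rule cong_mult) simp
    moreover have "[3 * int x = -2] (mod int p)" using assms(5) by simp
    moreover have "[int (g^(n div 2)) * int (g^c2) = -1 * 2] (mod int p)" using am a2 by (rule cong_mult)
    ultimately have "[int (g^c3) * int x = int (g^(n div 2)) * int (g^c2)] (mod int p)"
      by (metis cong_sym cong_trans mult_minus1)
    then have "[int (g^c3 * x) = int (g^(n div 2 + c2))] (mod int p)" by (simp add: power_add)
    then show ?thesis by (simp only: cong_int_iff)
  qed
  then have "[(g^c3 * x)^m = (g^(n div 2 + c2))^m] (mod p)" by (rule cong_pow)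
  then have "[g^(c3 * m) * x^m = g^((n div 2 + c2) * m)] (mod p)"
    by (simp add: power_mult_distrib power_mult)
  then have "[g^(c3 * m) * x^m = g^(c3 * m) * 1] (mod p)" using cg2 by (simp add: cong_trans)
  moreover have "coprime (g^(c3 * m)) p" using cop by (simp add: coprime_commute)
  ultimately have "[x^m = 1] (mod p)" using cong_mult_lcancel_nat[of "g^(c3*m)" p "x^m" 1] by blast
  then have "ord p x dvd m" by (simp add: ord_divides')
  then show ?thesis using om by (meson dvd_trans)

qed

end
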